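(* Let $T>0$. Define $\lambda(T)$ by $$\lambda(T)=\begin{cases}\dfrac{-q+\sqrt{q^2-4pr}}{2p} & \text{if } w^*_b\neq\tfrac12,\\[2mm] \dfrac{4\sum_{i\in\mathcal{K}'}I_i\log I_i+T+S}{2\sum_{i\in\mathcal{K}'}I_i} & \text{if } w^*_b=\tfrac12,\end{cases}$$ (where in the first case it is assumed that $q^2-4pr\ge0$), and define $W(T)=(W_1(T),\dots,W_k(T))$ by $W_i(T)=w^*_i\,\frac{\lambda(T)-2\log I_i}{1+T/S}$ for $i\in\mathcal{K}'$ and $W_b(T)=\sigma_b\sqrt{\sum_{i\in\mathcal{K}'}W_i(T)^2/\sigma_i^2}$. Let $I_{\max}=\max_{i\in\mathcal{K}'}I_i$ and $$T_1=2\sum_{i\in\mathcal{K}'}\Big[\frac{\sigma_b^2I_i^2}{\sigma_i^2(S-I_b)}-I_i\Big]\log\frac{I_{\max}}{I_i}-S,$$ $$T_2=2\sum_{i\in\mathcal{K}'}I_i\log\frac{I_{\max}}{I_i}+2\sigma_b\sqrt{\sum_{i\in\mathcal{K}'}\frac{I_i^2}{\sigma_i^2}\Big(\log\frac{I_{\max}}{I_i}\Big)^2}-S,$$ $$T_0=\begin{cases}\max\{T_1,T_2\}&\text{if } w^*_b\ne\tfrac12,\\ 4\sum_{i\in\mathcal{K}'}I_i\log\frac{I_{\max}}{I_i}-S&\text{if } w^*_b=\tfrac12.\end{cases}$$ If $T\ge T_0$, then $W_i(T)\ge0$ for all $i\in\mathcal{K}$.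
   Context: Let $k\ge 2$ and $\mathcal{K}=\{1,\dots,k\}$. For each $i\in\mathcal{K}$ fix real numbers $\mu_i$ and $\sigma_i>0$. Let $b\in\mathcal{K}$ be the unique index with $\mu_b<\mu_i$ for all $i\neq b$, and let $\mathcal{K}'=\mathcal{K}\setminus\{b\}$. For $i\in\mathcal{K}'$ put $\delta_{i,b}=\mu_i-\mu_b>0$ and $I_i=\sigma_i^2/\delta_{i,b}^2$; put $I_b=\sigma_b\sqrt{\sum_{i\in\mathcal{K}'}I_i^2/\sigma_i^2}$, $S=\sum_{i\in\mathcal{K}}I_i$, and $w^*_i=I_i/S$ for $i\in\mathcal{K}$. Define $p=S(2I_b-S)$, $q=-4\sigma_b^2\sum_{i\in\mathcal{K}'}\frac{I_i^2\log I_i}{\sigma_i^2}+2(S-I_b)\big(2\sum_{i\in\mathcal{K}'}I_i\log I_i+T+S\big)$, $r=4\sigma_b^2\sum_{i\in\mathcal{K}'}\frac{I_i^2\log^2I_i}{\sigma_i^2}-\big(2\sum_{i\in\mathcal{K}'}I_i\log I_i+T+S\big)^2$. *)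

theory Defs
  imports Complex_Main
begin

text \<open>Arms are indexed by 1..k; b is the best arm; mu, sigma the means and std deviations.\<close>

definition Kp :: "nat \<Rightarrow> nat \<Rightarrow> nat set" where
  "Kp k b = {1..k} - {b}"

definition Ibest :: "nat \<Rightarrow> (nat \<Rightarrow> real) \<Rightarrow> (nat \<Rightarrow> real) \<Rightarrow> nat \<Rightarrow> real" where
  "Ibest k mu sigma b =
     sigma b * sqrt (\<Sum>i\<in>Kp k b. ((sigma i)\<^sup>2 / (mu i - mu b)\<^sup>2)\<^sup>2 / (sigma i)\<^sup>2)"

definition II :: "nat \<Rightarrow> (nat \<Rightarrow> real) \<Rightarrow> (nat \<Rightarrow> real) \<Rightarrow> nat \<Rightarrow> nat \<Rightarrow> real" where
  "II k mu sigma b i =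
     (if i = b then Ibest k mu sigma b else (sigma i)\<^sup>2 / (mu i - mu b)\<^sup>2)"

definition SS :: "nat \<Rightarrow> (nat \<Rightarrow> real) \<Rightarrow> (nat \<Rightarrow> real) \<Rightarrow> nat \<Rightarrow> real" where
  "SS k mu sigma b = (\<Sum>i\<in>{1..k}. II k mu sigma b i)"

definition wstar :: "nat \<Rightarrow> (nat \<Rightarrow> real) \<Rightarrow> (nat \<Rightarrow> real) \<Rightarrow> nat \<Rightarrow> nat \<Rightarrow> real" where
  "wstar k mu sigma b i = II k mu sigma b i / SS k mu sigma b"

definition pp :: "nat \<Rightarrow> (nat \<Rightarrow> real) \<Rightarrow> (nat \<Rightarrow> real) \<Rightarrow> nat \<Rightarrow> real" where
  "pp k mu sigma b = SS k mu sigma b * (2 * II k mu sigma b b - SS k mu sigma b)"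

definition qq :: "nat \<Rightarrow> (nat \<Rightarrow> real) \<Rightarrow> (nat \<Rightarrow> real) \<Rightarrow> nat \<Rightarrow> real \<Rightarrow> real" where
  "qq k mu sigma b T =
     (let I = II k mu sigma b; S = SS k mu sigma b in
      - 4 * (sigma b)\<^sup>2 * (\<Sum>i\<in>Kp k b. (I i)\<^sup>2 * ln (I i) / (sigma i)\<^sup>2)
      + 2 * (S - I b) * (2 * (\<Sum>i\<in>Kp k b. I i * ln (I i)) + T + S))"

definition rr :: "nat \<Rightarrow> (nat \<Rightarrow> real) \<Rightarrow> (nat \<Rightarrow> real) \<Rightarrow> nat \<Rightarrow> real \<Rightarrow> real" where
  "rr k mu sigma b T =
     (let I = II k mu sigma b; S = SS k mu sigma b in
      4 * (sigma b)\<^sup>2 * (\<Sum>i\<in>Kp k b. (I i)\<^sup>2 * (ln (I i))\<^sup>2 / (sigma i)\<^sup>2)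
      - (2 * (\<Sum>i\<in>Kp k b. I i * ln (I i)) + T + S)\<^sup>2)"

definition lam :: "nat \<Rightarrow> (nat \<Rightarrow> real) \<Rightarrow> (nat \<Rightarrow> real) \<Rightarrow> nat \<Rightarrow> real \<Rightarrow> real" where
  "lam k mu sigma b T =
     (let I = II k mu sigma b; S = SS k mu sigma b;
          p = pp k mu sigma b; q = qq k mu sigma b T; r = rr k mu sigma b T in
      if wstar k mu sigma b b \<noteq> 1/2
      then (- q + sqrt (q\<^sup>2 - 4 * p * r)) / (2 * p)
      else (4 * (\<Sum>i\<in>Kp k b. I i * ln (I i)) + T + S) / (2 * (\<Sum>i\<in>Kp k b. I i)))"

definition Wsub :: "nat \<Rightarrow> (nat \<Rightarrow> real) \<Rightarrow> (nat \<Rightarrow> real) \<Rightarrow> nat \<Rightarrow> real \<Rightarrow> nat \<Rightarrow> real" where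
  "Wsub k mu sigma b T i =
     wstar k mu sigma b i * (lam k mu sigma b T - 2 * ln (II k mu sigma b i))
       / (1 + T / SS k mu sigma b)"

definition W :: "nat \<Rightarrow> (nat \<Rightarrow> real) \<Rightarrow> (nat \<Rightarrow> real) \<Rightarrow> nat \<Rightarrow> real \<Rightarrow> nat \<Rightarrow> real" where
  "W k mu sigma b T i =
     (if i = b then sigma b * sqrt (\<Sum>j\<in>Kp k b. (Wsub k mu sigma b T j)\<^sup>2 / (sigma j)\<^sup>2)
      else Wsub k mu sigma b T i)"

definition Imax :: "nat \<Rightarrow> (nat \<Rightarrow> real) \<Rightarrow> (nat \<Rightarrow> real) \<Rightarrow> nat \<Rightarrow> real" where
  "Imax k mu sigma b = Max (II k mu sigma b ` Kp k b)"

definition T1 :: "nat \<Rightarrow> (nat \<Rightarrow> real) \<Rightarrow> (nat \<Rightarrow> real) \<Rightarrow> nat \<Rightarrow> real" where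
  "T1 k mu sigma b =
     (let I = II k mu sigma b; S = SS k mu sigma b; M = Imax k mu sigma b in
      2 * (\<Sum>i\<in>Kp k b. ((sigma b)\<^sup>2 * (I i)\<^sup>2 / ((sigma i)\<^sup>2 * (S - I b)) - I i)
                           * ln (M / I i)) - S)"

definition T2 :: "nat \<Rightarrow> (nat \<Rightarrow> real) \<Rightarrow> (nat \<Rightarrow> real) \<Rightarrow> nat \<Rightarrow> real" where
  "T2 k mu sigma b =
     (let I = II k mu sigma b; S = SS k mu sigma b; M = Imax k mu sigma b in
      2 * (\<Sum>i\<in>Kp k b. I i * ln (M / I i))
      + 2 * sigma b * sqrt (\<Sum>i\<in>Kp k b. (I i)\<^sup>2 / (sigma i)\<^sup>2 * (ln (M / I i))\<^sup>2) - S)"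

definition T0 :: "nat \<Rightarrow> (nat \<Rightarrow> real) \<Rightarrow> (nat \<Rightarrow> real) \<Rightarrow> nat \<Rightarrow> real" where
  "T0 k mu sigma b =
     (if wstar k mu sigma b b \<noteq> 1/2 then max (T1 k mu sigma b) (T2 k mu sigma b)
      else 4 * (\<Sum>i\<in>Kp k b. II k mu sigma b i * ln (Imax k mu sigma b / II k mu sigma b i))
           - SS k mu sigma b)"

end

theory Submission
  imports Defs
begin

theorem lemma3:
  fixes k b :: nat and mu sigma :: "nat \<Rightarrow> real" and T :: real
  assumes "k \<ge> 2"
    and "b \<in> {1..k}"
    and "\<forall>i\<in>{1..k}. i \<noteq> b \<longrightarrow> mu b < mu i"
    and "\<forall>i\<in>{1..k}. sigma i > 0"
    and "T > 0"
    and "wstar k mu sigma b b \<noteq> 1/2 \<Longrightarrow>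
           (qq k mu sigma b T)\<^sup>2 - 4 * pp k mu sigma b * rr k mu sigma b T \<ge> 0"
    and "T \<ge> T0 k mu sigma b"
  shows "\<forall>i\<in>{1..k}. W k mu sigma b T i \<ge> 0"
proof -
  define K where "K = Kp k b"
  define I where "I = II k mu sigma b"
  define S where "S = SS k mu sigma b"
  define M where "M = Imax k mu sigma b"
  define m where "m = ln M"
  define p where "p = pp k mu sigma b"
  define q where "q = qq k mu sigma b T"
  define r where "r = rr k mu sigma b T"
  define lm where "lm = lam k mu sigma b T"
  have finK: "finite K" by (simp add: K_def Kp_def)
  have Kne: "K \<noteq> {}"
  proof -
    have "(if b = 1 then 2 else 1) \<in> K" using assms(1,2) by (auto simp: K_def Kp_def)
    thus ?thesis by auto
  qed
  have Ipos: "\<forall>i\<in>K. I i > 0"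
  proof
    fix i assume i: "i \<in> K"
    hence "i \<noteq> b" "i \<in> {1..k}" by (auto simp: K_def Kp_def)
    hence "mu b < mu i" "sigma i > 0" using assms(3,4) by auto
    thus "I i > 0" using \<open>i \<noteq> b\<close> by (simp add: I_def II_def)
  qed
  define B where "B = (\<Sum>i\<in>K. (I i)^2/(sigma i)^2)"
  define P where "P = (\<Sum>i\<in>K. I i)"
  have Ib: "I b = sigma b * sqrt B"
  proof -
    have "(\<Sum>i\<in>K. (I i)^2/(sigma i)^2) = (\<Sum>i\<in>Kp k b. ((sigma i)\<^sup>2 / (mu i - mu b)\<^sup>2)\<^sup>2 / (sigma i)\<^sup>2)"
      by (rule sum.cong) (auto simp: K_def Kp_def I_def II_def)
    thus ?thesis by (simp add: B_def I_def II_def Ibest_def)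
  qed
  have sb: "sigma b > 0" using assms(2,4) by auto
  have Bnn: "B \<ge> 0" unfolding B_def by (rule sum_nonneg) simp
  have Ib2: "(I b)^2 = (sigma b)^2 * B" using Ib Bnn by (simp add: power_mult_distrib)
  have Ibnn: "I b \<ge> 0" using Ib Bnn sb by simp
  have Ppos: "P > 0" unfolding P_def using finK Kne Ipos by (simp add: sum_pos)
  have SIP: "S = I b + P"
  proof -
    have "S = (\<Sum>i\<in>{1..k}. I i)" by (simp add: S_def SS_def I_def)
    also have "\<dots> = I b + (\<Sum>i\<in>{1..k} - {b}. I i)" using assms(2) by (simp add: sum.remove)
    finally show ?thesis by (simp add: P_def K_def Kp_def)
  qed
  have Spos: "S > 0" using SIP Ibnn Ppos by simp
  have MK: "M \<in> I ` K" unfolding M_def Imax_def using finK Kne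
    by (simp add: I_def K_def)
  have Mge: "\<forall>i\<in>K. I i \<le> M" unfolding M_def Imax_def using finK
    by (simp add: I_def K_def)
  have Mpos: "M > 0" using MK Ipos by auto
  define a where "a i = ln (M / I i)" for i
  have a_eq: "\<forall>i\<in>K. a i = m - ln (I i)"
  proof
    fix i assume "i \<in> K"
    hence "I i > 0" using Ipos by auto
    thus "a i = m - ln (I i)" using Mpos unfolding a_def m_def by (simp add: ln_div)
  qed
  have a_nn: "\<forall>i\<in>K. a i \<ge> 0" using Ipos Mge by (simp add: a_def)
  define R1 where "R1 = (\<Sum>i\<in>K. I i * ln (I i))"
  define Q1 where "Q1 = (\<Sum>i\<in>K. (I i)^2/(sigma i)^2 * ln (I i))"
  define Q2 where "Q2 = (\<Sum>i\<in>K. (I i)^2/(sigma i)^2 * (ln (I i))^2)"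
  define E where "E = (\<Sum>i\<in>K. (I i)^2/(sigma i)^2 * (a i)^2)"
  define F where "F = (\<Sum>i\<in>K. (I i)^2/(sigma i)^2 * a i)"
  define Ia where "Ia = (\<Sum>i\<in>K. I i * a i)"
  have Ia_eq: "Ia = m * P - R1"
  proof -
    have "Ia = (\<Sum>i\<in>K. m * I i - I i * ln (I i))"
      unfolding Ia_def by (rule sum.cong) (auto simp: a_eq algebra_simps)
    thus ?thesis by (simp add: sum_subtractf sum_distrib_left P_def R1_def)
  qed
  have E_eq: "E = m^2 * B - 2 * m * Q1 + Q2"
  proof -
    have "E = (\<Sum>i\<in>K. m^2 * ((I i)^2/(sigma i)^2) - 2 * m * ((I i)^2/(sigma i)^2 * ln (I i))
              + (I i)^2/(sigma i)^2 * (ln (I i))^2)"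
      unfolding E_def by (rule sum.cong) (auto simp: a_eq power2_eq_square algebra_simps add_divide_distrib)
    thus ?thesis by (simp add: sum.distrib sum_subtractf sum_distrib_left B_def Q1_def Q2_def)
  qed
  have F_eq: "F = m * B - Q1"
  proof -
    have "F = (\<Sum>i\<in>K. m * ((I i)^2/(sigma i)^2) - (I i)^2/(sigma i)^2 * ln (I i))"
      unfolding F_def
    proof (rule sum.cong[OF refl])
      fix x assume "x \<in> K"
      hence ax: "a x = m - ln (I x)" using a_eq by auto
      have "\<And>c. c * (m - ln (I x)) = m * c - c * ln (I x)" by (simp add: algebra_simps)
      thus "(I x)^2/(sigma x)^2 * a x = m * ((I x)^2/(sigma x)^2) - (I x)^2/(sigma x)^2 * ln (I x)"
        unfolding ax by blast
    qed
    thus ?thesis by (simp add: sum_subtractf sum_distrib_left B_def Q1_def)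
  qed
  have Enn: "E \<ge> 0" unfolding E_def by (rule sum_nonneg) simp
  have Fnn: "F \<ge> 0" unfolding F_def using a_nn by (intro sum_nonneg) simp
  have key: "lm \<ge> 2 * m"
  proof (cases "wstar k mu sigma b b \<noteq> 1/2")
    case True
    have D: "q^2 - 4*p*r \<ge> 0" using assms(6)[OF True] by (simp add: p_def q_def r_def)
    have lmq: "lm = (- q + sqrt (q^2 - 4*p*r)) / (2*p)"
      using True by (simp add: lm_def lam_def Let_def p_def q_def r_def)
    have pe: "p = (sigma b)^2 * B - P^2"
      unfolding p_def pp_def using SIP Ib2 by (simp add: S_def I_def power2_eq_square algebra_simps)
    have qe: "q = -4 * (sigma b)^2 * Q1 + 2 * P * (2 * R1 + T + S)"
      unfolding q_def qq_def using SIP by (simp add: Let_def S_def I_def Q1_def P_def R1_def K_def)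
    have re: "r = 4 * (sigma b)^2 * Q2 - (2 * R1 + T + S)^2"
      unfolding r_def rr_def by (simp add: Let_def S_def I_def Q2_def R1_def K_def)
    have pnz: "p \<noteq> 0"
    proof
      assume "p = 0"
      hence "2 * I b = S" using Spos by (simp add: p_def pp_def S_def I_def)
      hence "wstar k mu sigma b b = 1/2" using Spos by (simp add: wstar_def S_def I_def)
      thus False using True by simp
    qed
    have T2: "T \<ge> 2 * Ia + 2 * sigma b * sqrt E - S"
    proof -
      have "T0 k mu sigma b \<ge> T2 k mu sigma b" using True by (simp add: T0_def)
      moreover have "T2 k mu sigma b = 2 * Ia + 2 * sigma b * sqrt E - S"
        by (simp add: T2_def Let_def Ia_def E_def a_def I_def S_def M_def K_def)
      ultimately show ?thesis using assms(7) by simp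
    qed
    define G where "G = T + S - 2 * Ia"
    have G1: "G \<ge> 2 * sigma b * sqrt E" using T2 by (simp add: G_def)
    have Gnn: "G \<ge> 0" using G1 sb Enn by (smt (verit) mult_nonneg_nonneg real_sqrt_ge_zero)
    have G2: "G^2 \<ge> 4 * (sigma b)^2 * E"
    proof -
      have "(2 * sigma b * sqrt E)^2 \<le> G^2"
        using G1 sb Enn by (intro power_mono) auto
      thus ?thesis using Enn by (simp add: power_mult_distrib)
    qed
    have g: "p * (2*m)^2 + q * (2*m) + r = 4 * (sigma b)^2 * E - G^2"
      unfolding pe qe re E_eq G_def Ia_eq by (simp add: power2_eq_square algebra_simps)
    have gle: "p * (2*m)^2 + q * (2*m) + r \<le> 0" using g G2 by simp
    define h where "h = q + 4 * p * m"
    have he: "h = 4 * (sigma b)^2 * F + 2 * P * G"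
      unfolding h_def pe qe F_eq G_def Ia_eq by (simp add: power2_eq_square algebra_simps)
    have hnn: "h \<ge> 0" using he Fnn Ppos Gnn by simp
    have Dh: "q^2 - 4*p*r - h^2 = -4 * p * (p * (2*m)^2 + q * (2*m) + r)"
      unfolding h_def by (simp add: power2_eq_square algebra_simps)
    show ?thesis
    proof (cases "p > 0")
      case pp: True
      have "(-4*p) * (p * (2*m)^2 + q * (2*m) + r) \<ge> 0"
        by (rule mult_nonpos_nonpos) (use pp gle in auto)
      hence "h^2 \<le> q^2 - 4*p*r" using Dh by linarith
      hence "sqrt (h^2) \<le> sqrt (q^2 - 4*p*r)" by (rule real_sqrt_le_mono)
      hence "h \<le> sqrt (q^2 - 4*p*r)" using hnn by simp
      hence "2 * m * (2 * p) \<le> - q + sqrt (q^2 - 4*p*r)" unfolding h_def by (simp add: algebra_simps)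
      thus ?thesis unfolding lmq using pp by (simp add: pos_le_divide_eq)
    next
      case False
      hence pn: "p < 0" using pnz by simp
      have "(-4*p) * (p * (2*m)^2 + q * (2*m) + r) \<le> 0"
        by (rule mult_nonneg_nonpos) (use pn gle in auto)
      hence "q^2 - 4*p*r \<le> h^2" using Dh by linarith
      hence "sqrt (q^2 - 4*p*r) \<le> sqrt (h^2)" by (rule real_sqrt_le_mono)
      hence "sqrt (q^2 - 4*p*r) \<le> h" using hnn by simp
      hence "- q + sqrt (q^2 - 4*p*r) \<le> 2 * m * (2 * p)" unfolding h_def by (simp add: algebra_simps)
      thus ?thesis unfolding lmq using pn by (simp add: neg_le_divide_eq)
    qed
  next
    case False
    have lmq: "lm = (4 * R1 + T + S) / (2 * P)"
      using False by (simp add: lm_def lam_def Let_def R1_def S_def P_def I_def K_def)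
    have "T \<ge> 4 * Ia - S"
      using assms(7) False by (simp add: T0_def Ia_def a_def I_def S_def M_def K_def)
    hence "2 * m * (2 * P) \<le> 4 * R1 + T + S" using Ia_eq by simp
    thus ?thesis unfolding lmq using Ppos by (simp add: pos_le_divide_eq)
  qed
  show ?thesis
  proof
    fix i assume i: "i \<in> {1..k}"
    show "W k mu sigma b T i \<ge> 0"
    proof (cases "i = b")
      case True thus ?thesis using sb by (simp add: W_def sum_nonneg)
    next
      case False
      hence iK: "i \<in> K" using i by (simp add: K_def Kp_def)
      have "lm - 2 * ln (I i) \<ge> 0" using key a_eq a_nn iK by force
      moreover have "wstar k mu sigma b i > 0" using Ipos iK Spos by (simp add: wstar_def I_def S_def)
      moreover have "1 + T / S > 0" using Spos assms(5) by (simp add: add_pos_pos)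
      ultimately show ?thesis using False
        by (simp add: W_def Wsub_def lm_def I_def S_def)
    qed
  qed
qed

end
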